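(* Let $\mathcal{D}=\{t_1,\dots,t_n\}$ be a relational database whose tables are indexed according to a topological order of its (acyclic) foreign-key graph, with the relation $\preceq$ (affect-or-equal) defined below. For indices $i\le j$, we have $t_i\preceq t_j$ if and only if $t_i$ and $t_j$ are connected in the subgraph $\mathcal{G}_j$ of the foreign-key graph induced on the vertices $t_1,t_2,\dots,t_j$, where connectivity ignores edge directions and every table is considered connected to itself.
   Context: A relational database is a finite set of tables $t_1,\dots,t_n$. A foreign key constraint $\phi_{ij}$ means that table $t_i$ is a parent of table $t_j$ (i.e. $t_j$ references $t_i$); $\Phi_j$ denotes the set of all foreign key constraints on $t_j$. The foreign-key graph is the directed graph whose vertices are the tables, with an edge between $t_i$ and $t_j$ (directed from parent $t_i$ to child $t_j$) whenever some $\phi_{ij}\in\Phi_j$; it is assumed acyclic, and the indices are chosen according to a topological order, so that $\phi_{ij}\in\Phi_j$ implies $i<j$. Write $\mathbb{N}_m=\{1,2,\dots,m\}$. The relation ascend-or-equal $\preceq^*$ is defined by: $t_i\preceq^* t_j$ iff $i=j$, or there exists $k\in\mathbb{N}_n$ with $\phi_{ik}\in\Phi_k$ and $t_k\preceq^* t_j$. The relation affect-or-equal $\preceq$ is the (smallest) relation satisfying: $t_i\preceq t_j$ iff $t_i\preceq^* t_j$, or [$i<j$ and there exists $k\in\mathbb{N}_{j-1}\setminus\{i\}$ such that ($t_i\preceq t_k$ or $t_k\preceq t_i$) and $t_k\preceq t_j$]. *)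

theory Defs
  imports Main
begin

text \<open>Tables are t_1,...,t_n, identified with their indices 1..n.
  fk i j means the foreign key constraint phi_ij is in Phi_j, i.e. t_i is a parent of t_j.\<close>

definition topo_fk :: "nat \<Rightarrow> (nat \<Rightarrow> nat \<Rightarrow> bool) \<Rightarrow> bool" where
  "topo_fk n fk \<longleftrightarrow> (\<forall>i j. fk i j \<longrightarrow> 1 \<le> i \<and> i < j \<and> j \<le> n)"

inductive asc :: "nat \<Rightarrow> (nat \<Rightarrow> nat \<Rightarrow> bool) \<Rightarrow> nat \<Rightarrow> nat \<Rightarrow> bool"
  for n fk where
  asc_refl: "asc n fk i i"
| asc_step: "k \<in> {1..n} \<Longrightarrow> fk i k \<Longrightarrow> asc n fk k j \<Longrightarrow> asc n fk i j"

inductive aff :: "nat \<Rightarrow> (nat \<Rightarrow> nat \<Rightarrow> bool) \<Rightarrow> nat \<Rightarrow> nat \<Rightarrow> bool"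
  for n fk where
  aff_asc: "asc n fk i j \<Longrightarrow> aff n fk i j"
| aff_step: "i < j \<Longrightarrow> k \<in> {1..j-1} - {i} \<Longrightarrow> aff n fk i k \<or> aff n fk k i
             \<Longrightarrow> aff n fk k j \<Longrightarrow> aff n fk i j"

definition sub_edge :: "(nat \<Rightarrow> nat \<Rightarrow> bool) \<Rightarrow> nat \<Rightarrow> nat \<Rightarrow> nat \<Rightarrow> bool" where
  "sub_edge fk j x y \<longleftrightarrow> x \<in> {1..j} \<and> y \<in> {1..j} \<and> (fk x y \<or> fk y x)"

definition connected_in :: "(nat \<Rightarrow> nat \<Rightarrow> bool) \<Rightarrow> nat \<Rightarrow> nat \<Rightarrow> nat \<Rightarrow> bool" where
  "connected_in fk j x y \<longleftrightarrow> (sub_edge fk j)\<^sup>*\<^sup>* x y"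

end

theory Submission
  imports Defs
begin

lemma conn_mono:
  assumes "connected_in fk a x y" "a \<le> b"
  shows "connected_in fk b x y"
proof -
  have "sub_edge fk a \<le> sub_edge fk b" using assms(2)
    by (auto simp: sub_edge_def)
  then show ?thesis using assms(1) unfolding connected_in_def
    by (metis rtranclp_mono predicate2D)
qed

lemma conn_sym:
  assumes "connected_in fk a x y"
  shows "connected_in fk a y x"
proof -
  have s: "\<And>u v. sub_edge fk a u v \<Longrightarrow> sub_edge fk a v u" by (auto simp: sub_edge_def)
  have "(sub_edge fk a)\<^sup>*\<^sup>* x y \<Longrightarrow> (sub_edge fk a)\<^sup>*\<^sup>* y x"
    by (induction rule: rtranclp_induct) (auto intro: converse_rtranclp_into_rtranclp s)
  then show ?thesis using assms unfolding connected_in_def by blast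
qed

lemma conn_trans:
  "connected_in fk a x y \<Longrightarrow> connected_in fk a y z \<Longrightarrow> connected_in fk a x z"
  unfolding connected_in_def by (rule rtranclp_trans)

lemma asc_conn:
  assumes "topo_fk n fk"
  shows "asc n fk i j \<Longrightarrow> i \<le> j \<and> connected_in fk j i j"
proof (induction rule: asc.induct)
  case (asc_refl i)
  then show ?case by (simp add: connected_in_def)
next
  case (asc_step k i j)
  then have "1 \<le> i" "i < k" using assms by (auto simp: topo_fk_def)
  then have "sub_edge fk j i k" using asc_step by (auto simp: sub_edge_def)
  then show ?case using asc_step \<open>i < k\<close> unfolding connected_in_def
    by (auto intro: converse_rtranclp_into_rtranclp)
qed

lemma aff_conn:
  assumes "topo_fk n fk"
  shows "aff n fk i j \<Longrightarrow> i \<le> j \<and> connected_in fk j i j"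
proof (induction rule: aff.induct)
  case (aff_asc i j)
  then show ?case using asc_conn[OF assms] by blast
next
  case (aff_step i j k)
  have k: "1 \<le> k" "k < j" "k \<noteq> i" using aff_step(2) by auto
  have c1: "connected_in fk j i k"
  proof (rule disjE[OF aff_step(4)])
    assume "aff n fk i k \<and> i \<le> k \<and> connected_in fk k i k"
    then have "connected_in fk k i k" by blast
    moreover have "k \<le> j" using k by linarith
    ultimately show ?thesis using conn_mono by blast
  next
    assume "aff n fk k i \<and> k \<le> i \<and> connected_in fk i k i"
    then have "connected_in fk i k i" by blast
    moreover have "i \<le> j" using \<open>i < j\<close> by linarith
    ultimately have "connected_in fk j k i" using conn_mono by blast
    then show ?thesis using conn_sym by blast
  qed
  have "connected_in fk j k j" using aff_step(5) by blast
  then show ?case using c1 conn_trans[of fk j i k j] \<open>i < j\<close> by simp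
qed

lemma conn_aff:
  assumes "topo_fk n fk" "j \<le> n"
  shows "(sub_edge fk j)\<^sup>*\<^sup>* x j \<Longrightarrow> x \<le> j \<Longrightarrow> aff n fk x j"
proof (induction rule: converse_rtranclp_induct)
  case base
  then show ?case by (simp add: aff_asc asc_refl)
next
  case (step x w)
  have w: "1 \<le> w" "w \<le> j" "1 \<le> x" using step(1) by (auto simp: sub_edge_def)
  have aw: "aff n fk w j" using step w by simp
  have e: "fk x w \<or> fk w x" using step(1) by (auto simp: sub_edge_def)
  show ?case
  proof (cases "x = j")
    case True
    then show ?thesis by (simp add: aff_asc asc_refl)
  next
    case False
    then have xj: "x < j" using step by simp
    show ?thesis
    proof (cases "w = j")
      case True
      have "\<not> fk j x" using xj assms(1) unfolding topo_fk_def by (meson leD less_imp_le)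
      then have "fk x j" using e True by simp
      then have "asc n fk x j" using w assms(2) True
        by (auto intro: asc_step asc_refl)
      then show ?thesis by (rule aff_asc)
    next
      case False
      have "x \<noteq> w" using e assms(1) by (auto simp: topo_fk_def)
      moreover have "aff n fk x w \<or> aff n fk w x"
      proof (cases "fk x w")
        case True
        have "asc n fk x w" using asc.asc_step[of w n fk x w, OF _ True asc.asc_refl] w assms(2) by simp
        then show ?thesis using aff_asc by blast
      next
        case False
        then have "fk w x" using e by simp
        have "asc n fk w x" using asc.asc_step[of x n fk w x, OF _ \<open>fk w x\<close> asc.asc_refl] w xj assms(2) by simp
        then show ?thesis using aff_asc by blast
      qed
      ultimately show ?thesis using aff_step[of x j w n fk] xj False w aw by auto
    qed
  qed
qed

theorem lemma3p4:
  fixes n :: nat and fk :: "nat \<Rightarrow> nat \<Rightarrow> bool" and i j :: nat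
  assumes "topo_fk n fk"
    and "1 \<le> i" and "i \<le> j" and "j \<le> n"
  shows "aff n fk i j \<longleftrightarrow> connected_in fk j i j"
  using aff_conn[OF assms(1)] conn_aff[OF assms(1) assms(4)] assms(3)
  unfolding connected_in_def by blast

end
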